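(* Let $\nu\geq\frac12$ and $0<B\leq\sqrt{\frac{\pi}{e}}$, and set $x_0:=\frac{\pi}{B^2}$. If $z>0$ satisfies $$2z\;\leq\;\log x_0-\log\log x_0+\frac12\,\frac{\log\log x_0}{\log x_0},$$ then $K_\nu(z)\geq K_{1/2}(z)\geq B$.
   Context: $K_\nu$ denotes the modified Bessel function of the second kind of real order $\nu$, for real argument $z>0$; in particular $K_{1/2}(z)=e^{-z}\sqrt{\pi/(2z)}$. *)

theory Defs
  imports "HOL-Analysis.Analysis"
begin

definition besselK :: "real \<Rightarrow> real \<Rightarrow> real" where
  "besselK \<nu> z = integral {0..} (\<lambda>t::real. exp (- z * cosh t) * cosh (\<nu> * t))"

end

theory Submission
  imports Defs "HOL-Probability.Distributions"
begin


lemma cosh_le_exp_abs: "cosh (x::real) \<le> exp \<bar>x\<bar>"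
  by (simp add: cosh_def abs_if)

lemma exp_neg_bound:
  fixes y :: real assumes "y > 0" "n > 0"
  shows "exp (- y) \<le> (real n / y) ^ n"
proof -
  have "(y / real n) ^ n \<le> (1 + y / real n) ^ n"
    using assms by (intro power_mono) auto
  also have "\<dots> \<le> exp y"
    using assms by (intro exp_ge_one_plus_x_over_n_power_n) auto
  finally have "(y / real n) ^ n \<le> exp y" .
  hence "inverse (exp y) \<le> inverse ((y / real n) ^ n)"
    using assms by (intro le_imp_inverse_le) auto
  thus ?thesis using assms by (simp add: exp_minus inverse_eq_divide power_divide)
qed

lemma K_abs_integrable:
  fixes \<nu> z :: real assumes z: "z > 0"
  shows "(\<lambda>t. exp (- z * cosh t) * cosh (\<nu> * t)) absolutely_integrable_on {0..}"
proof (rule measurable_bounded_by_integrable_imp_absolutely_integrable)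
  define n where "n = nat \<lceil>\<bar>\<nu>\<bar>\<rceil> + 1"
  define C where "C = (2 * real n / z) ^ n"
  have n: "n > 0" "\<bar>\<nu>\<bar> \<le> real n - 1" unfolding n_def by auto
  show "(\<lambda>t. exp (- z * cosh t) * cosh (\<nu> * t)) \<in> borel_measurable (lebesgue_on {0..})"
    by (intro continuous_imp_measurable_on_sets_lebesgue continuous_intros) auto
  show "{0::real..} \<in> sets lebesgue" by simp
  show "(\<lambda>t. C * exp (- 1 * t)) integrable_on {0..}"
    by (intro integrable_on_mult_right integrable_on_exp_minus_to_infinity) simp
  show "norm (exp (- z * cosh t) * cosh (\<nu> * t)) \<le> C * exp (- 1 * t)" if t: "t \<in> {0..}" for t
  proof -
    have t0: "t \<ge> 0" using t by simp
    have "exp t / 2 \<le> cosh t" by (simp add: cosh_def)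
    hence "exp (- z * cosh t) \<le> exp (- (z * exp t / 2))" using z by simp
    also have "\<dots> \<le> (real n / (z * exp t / 2)) ^ n"
      using z n by (intro exp_neg_bound) auto
    also have "\<dots> = C * exp (- (real n * t))"
    proof -
      have eq: "real n / (z * exp t / 2) = (2 * real n / z) * exp (- t)"
        using z by (simp add: exp_minus divide_simps)
      have "(real n / (z * exp t / 2)) ^ n = C * exp (- t) ^ n"
        unfolding C_def eq by (rule power_mult_distrib)
      also have "exp (- t) ^ n = exp (- (real n * t))"
        by (subst exp_of_nat_mult[symmetric]) simp
      finally show ?thesis .
    qed
    finally have 1: "exp (- z * cosh t) \<le> C * exp (- (real n * t))" .
    have 2: "cosh (\<nu> * t) \<le> exp ((real n - 1) * t)"
    proof -
      have "\<bar>\<nu> * t\<bar> \<le> (real n - 1) * t"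
        using t0 n by (simp add: abs_mult mult_right_mono)
      thus ?thesis using cosh_le_exp_abs[of "\<nu> * t"] by (meson exp_le_cancel_iff order_trans)
    qed
    have "norm (exp (- z * cosh t) * cosh (\<nu> * t)) = exp (- z * cosh t) * cosh (\<nu> * t)"
      by (simp add: abs_mult)
    also have "\<dots> \<le> C * exp (- (real n * t)) * exp ((real n - 1) * t)"
      using 1 2 z by (intro mult_mono) (auto simp: C_def)
    also have "\<dots> = C * exp (- 1 * t)"
      by (simp add: mult.assoc exp_add[symmetric] algebra_simps)
    finally show ?thesis .
  qed
qed

lemma int_Ioi_Ici: "integral {0<..} f = integral {0::real..} (f :: real \<Rightarrow> real)"
  by (rule integral_spike_set; rule negligible_subset[of "{0}"]) auto

lemma gauss_half: "integral {0::real..} (\<lambda>x. exp (- x\<^sup>2)) = sqrt pi / 2"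
proof -
  have "set_integrable lborel {0::real..} (\<lambda>x. exp (- x\<^sup>2))"
        "(LINT x:{0::real..}|lborel. exp (- x\<^sup>2)) = sqrt pi / 2"
    using gaussian_moment_0 unfolding set_integrable_def set_lebesgue_integral_def has_bochner_integral_iff by auto
  thus ?thesis using set_borel_integral_eq_integral(2) by metis
qed

lemma sinh_half_ge: "(t::real) \<ge> 0 \<Longrightarrow> sinh (t/2) \<ge> t/4"
proof -
  assume t: "t \<ge> 0"
  define E where "E = exp (t/2)"
  define e where "e = exp (-(t/2))"
  have a: "1 + t/2 \<le> E" unfolding E_def by (rule exp_ge_add_one_self)
  have b: "e \<le> 1" using t unfolding e_def by simp
  have c: "sinh (t/2) = (E - e) / 2" unfolding E_def e_def by (simp add: sinh_def)
  have "E - e \<ge> t/2" using a b by linarith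
  thus ?thesis unfolding c by simp
qed

lemma K_half:
  fixes z :: real assumes z: "z > 0"
  shows "besselK (1/2) z = exp (- z) * sqrt (pi / (2*z))"
proof -
  define s where "s = sqrt (2*z)"
  define g where "g = (\<lambda>t. s * sinh (t/2))"
  define g' where "g' = (\<lambda>t. s/2 * cosh (t/2))"
  define F where "F = (\<lambda>t. exp (- z * cosh t) * cosh ((1/2) * t))"
  have s: "s > 0" "s^2 = 2*z" using z by (auto simp: s_def)
  have key: "exp (- (g t)\<^sup>2) * g' t = (s/2 * exp z) * F t" for t
  proof -
    have c: "cosh t = 1 + 2 * sinh (t/2)^2"
      using cosh_double[of "t/2"] cosh_square_eq[of "t/2"] by simp
    have "- (g t)\<^sup>2 = z + (- z * cosh t)"
      unfolding g_def c using s by (simp add: power_mult_distrib algebra_simps)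
    hence "exp (- (g t)\<^sup>2) = exp z * exp (- z * cosh t)" by (simp only: exp_add)
    thus ?thesis unfolding F_def g'_def by (simp add: mult_ac)
  qed
  have Fabs: "F absolutely_integrable_on {0..}"
    unfolding F_def by (rule K_abs_integrable[OF z])
  have Fleb: "set_integrable lebesgue {0<..} F"
    by (rule set_integrable_subset[OF Fabs]) auto
  have Fmeas: "(\<lambda>x. indicator {0<..} x *\<^sub>R F x) \<in> borel_measurable lborel"
  proof -
    have "F \<in> borel_measurable borel"
      unfolding F_def by (intro borel_measurable_continuous_onI continuous_intros)
    thus ?thesis by measurable
  qed
  have Fbor: "set_integrable lborel {0<..} F"
    using Fleb integrable_completion[OF Fmeas] by (simp add: set_integrable_def)
  have hint: "set_integrable lborel (einterval 0 \<infinity>) (\<lambda>x. exp (- (g x)\<^sup>2) * g' x)"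
    using Fbor by (simp add: key zero_ereal_def)
  have derivg: "DERIV g x :> g' x" for x
    unfolding g_def g'_def by (auto intro!: derivative_eq_intros)
  have glim: "filterlim g at_top at_top"
  proof (rule filterlim_at_top_mono[of "\<lambda>t. s/4 * t"])
    show "filterlim (\<lambda>t. s/4 * t) at_top at_top"
      using s by (intro filterlim_tendsto_pos_mult_at_top[OF tendsto_const] filterlim_ident) auto
    show "\<forall>\<^sub>F x in at_top. s/4 * x \<le> g x"
      using eventually_ge_at_top[of "0::real"]
      by eventually_elim (use s sinh_half_ge in \<open>auto simp: g_def intro: mult_left_mono\<close>)
  qed
  have sub: "(LBINT x=0..\<infinity>. exp (- x\<^sup>2)) = (LBINT x=0..\<infinity>. exp (- (g x)\<^sup>2) * g' x)"
       "set_integrable lborel (einterval 0 \<infinity>) (\<lambda>x::real. exp (- x\<^sup>2))"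
  proof -
    have A: "((ereal \<circ> g \<circ> real_of_ereal) \<longlongrightarrow> 0) (at_right 0)"
      by (auto simp: zero_ereal_def ereal_tendsto_simps g_def intro!: tendsto_eq_intros)
    have B: "((ereal \<circ> g \<circ> real_of_ereal) \<longlongrightarrow> \<infinity>) (at_left \<infinity>)"
      using glim by (simp add: ereal_tendsto_simps)
    have hint': "set_integrable lborel (einterval 0 \<infinity>) (\<lambda>x. (\<lambda>x. exp (- x\<^sup>2)) (g x) * g' x)"
      using hint by simp
    note S = interval_integral_substitution_nonneg[where a=0 and b=\<infinity> and g=g and g'=g'
        and f="\<lambda>x. exp (- x\<^sup>2)" and A=0 and B=\<infinity>, OF _ derivg _ _ _ _ A B hint']
    have g'0: "0 \<le> s * cosh (x / 2)" for x using s cosh_real_ge_1[of "x/2"] by simp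
    show "(LBINT x=0..\<infinity>. exp (- x\<^sup>2)) = (LBINT x=0..\<infinity>. exp (- (g x)\<^sup>2) * g' x)"
      by (rule S(2)) (auto simp: g'0 g'_def intro!: continuous_intros)
    show "set_integrable lborel (einterval 0 \<infinity>) (\<lambda>x::real. exp (- x\<^sup>2))"
      by (rule S(1)) (auto simp: g'0 g'_def intro!: continuous_intros)
  qed
  have "(LBINT x=0..\<infinity>. exp (- x\<^sup>2)) = integral {0<..} (\<lambda>x::real. exp (- x\<^sup>2))"
    using sub(2) by (subst interval_integral_eq_integral') (auto simp: zero_ereal_def)
  also have "\<dots> = sqrt pi / 2" by (simp add: int_Ioi_Ici gauss_half)
  finally have 1: "(LBINT x=0..\<infinity>. exp (- (g x)\<^sup>2) * g' x) = sqrt pi / 2" using sub(1) by simp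
  have "(LBINT x=0..\<infinity>. exp (- (g x)\<^sup>2) * g' x) = integral {0<..} (\<lambda>x. exp (- (g x)\<^sup>2) * g' x)"
    using hint by (subst interval_integral_eq_integral') (auto simp: zero_ereal_def)
  also have "\<dots> = integral {0<..} (\<lambda>x. (s/2 * exp z) * F x)" by (simp add: key)
  also have "\<dots> = (s/2 * exp z) * integral {0..} F"
    by (simp add: int_Ioi_Ici)
  finally have "integral {0..} F = sqrt pi / (s * exp z)" using 1 s by (simp add: field_simps)
  moreover have "besselK (1/2) z = integral {0..} F" unfolding besselK_def F_def by simp
  moreover have "sqrt (pi / (2*z)) = sqrt pi / s" by (simp add: s_def real_sqrt_divide)
  ultimately show ?thesis by (simp add: exp_minus field_simps)
qed


lemma final_ineq:
  fixes B z :: real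
  assumes B: "0 < B" "B \<le> sqrt (pi / exp 1)" and z: "z > 0"
    and h: "2 * z \<le> ln (pi / B^2) - ln (ln (pi / B^2))
                 + (1/2) * (ln (ln (pi / B^2)) / ln (pi / B^2))"
  shows "B \<le> exp (- z) * sqrt (pi / (2*z))"
proof -
  define x0 where "x0 = pi / B^2"
  define L where "L = ln x0"
  define lL where "lL = ln L"
  define a where "a = lL / L"
  define w where "w = 2 * z"
  define W where "W = L - lL + a/2"
  have "B^2 \<le> (sqrt (pi / exp 1))^2" using B by (intro power_mono) auto
  also have "\<dots> = pi / exp 1" by simp
  finally have "B^2 \<le> pi / exp 1" .
  hence "exp 1 \<le> x0" using B unfolding x0_def by (simp add: field_simps)
  hence x0: "x0 > 0" "L \<ge> 1"
  proof -
    assume e: "exp 1 \<le> x0"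
    show x0p: "x0 > 0" using e exp_gt_zero[of 1] by linarith
    have "ln (exp 1) \<le> ln x0" using e x0p by (subst ln_le_cancel_iff) auto
    thus "L \<ge> 1" unfolding L_def by simp
  qed
  have lL: "lL \<ge> 0" unfolding lL_def using x0 by simp
  have a: "a \<ge> 0" unfolding a_def using lL x0 by simp
  have wW: "w \<le> W" using h unfolding w_def W_def a_def lL_def L_def x0_def by simp
  have w: "w > 0" using z by (simp add: w_def)
  have expW: "exp W = x0 / L * exp (a/2)"
  proof -
    have eL: "exp L = x0" using x0 by (simp add: L_def)
    have elL: "exp lL = L" using x0 by (simp add: lL_def)
    show ?thesis unfolding W_def by (simp only: exp_add exp_diff eL elL)
  qed
  have "w * exp w \<le> W * exp W"
    using wW w by (intro mult_mono) auto
  also have "\<dots> = x0 * (W / L) * exp (a/2)" using expW x0 by (simp add: field_simps)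
  also have "\<dots> \<le> x0 * (1 - a/2) * exp (a/2)"
  proof -
    have "W / L = 1 - a + a / (2 * L)" unfolding W_def a_def using x0 by (simp add: field_simps)
    also have "\<dots> \<le> 1 - a/2"
    proof -
      have "a / (2 * L) \<le> a / 2" using a x0 by (intro divide_left_mono) auto
      thus ?thesis by simp
    qed
    finally show ?thesis using x0 by (intro mult_right_mono mult_left_mono) auto
  qed
  also have "\<dots> \<le> x0 * 1"
  proof -
    have "1 - a/2 \<le> exp (- (a/2))" using exp_ge_add_one_self[of "-(a/2)"] by simp
    hence "(1 - a/2) * exp (a/2) \<le> exp (-(a/2)) * exp (a/2)" by (intro mult_right_mono) auto
    hence "(1 - a/2) * exp (a/2) \<le> 1" by (simp add: exp_minus)
    thus ?thesis using x0 by (simp add: mult.assoc)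
  qed
  finally have wx: "w * exp w \<le> pi / B^2" unfolding x0_def by simp
  have "B^2 \<le> pi / (w * exp w)" using wx w B
    by (simp add: field_simps)
  also have "pi / (w * exp w) = (exp (- z) * sqrt (pi / (2*z)))^2"
  proof -
    have 1: "(exp (- z) * sqrt (pi / (2*z)))^2 = exp (-z)^2 * (pi / (2*z))"
      using z by (simp add: power_mult_distrib)
    have "exp (-z)^2 = exp (-z + -z)" by (simp add: power2_eq_square mult_exp_exp)
    also have "\<dots> = exp (- (2 * z))" by (rule arg_cong[where f=exp]) simp
    also have "\<dots> = inverse (exp w)" unfolding w_def by (rule exp_minus)
    finally have 2: "exp (-z)^2 = inverse (exp w)" .
    have 3: "pi / (w * E) = inverse E * (pi / (2*z))" if "E > 0" for E
      using that z by (simp add: w_def field_simps)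
    show ?thesis unfolding 1 2 by (rule 3) simp
  qed
  finally have "B^2 \<le> (exp (- z) * sqrt (pi / (2*z)))^2" .
  moreover have "0 \<le> exp (- z) * sqrt (pi / (2*z))" using z by simp
  ultimately show ?thesis by (rule power2_le_imp_le)
qed

theorem proposition4:
  fixes \<nu> B z :: real
  assumes "\<nu> \<ge> 1/2"
    and "0 < B" and "B \<le> sqrt (pi / exp 1)"
    and "z > 0"
    and "2 * z \<le> ln (pi / B^2) - ln (ln (pi / B^2))
                 + (1/2) * (ln (ln (pi / B^2)) / ln (pi / B^2))"
  shows "besselK \<nu> z \<ge> besselK (1/2) z \<and> besselK (1/2) z \<ge> B"
proof
  have i1: "(\<lambda>t. exp (- z * cosh t) * cosh ((1/2) * t)) integrable_on {0..}"
    using K_abs_integrable[OF assms(4)] set_lebesgue_integral_eq_integral(1) by blast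
  have i2: "(\<lambda>t. exp (- z * cosh t) * cosh (\<nu> * t)) integrable_on {0..}"
    using K_abs_integrable[OF assms(4)] set_lebesgue_integral_eq_integral(1) by blast
  show "besselK \<nu> z \<ge> besselK (1/2) z"
    unfolding besselK_def
  proof (rule integral_le[OF i1 i2])
    fix t :: real assume "t \<in> {0..}"
    hence t: "t \<ge> 0" by simp
    have "(1/2) * t \<le> \<nu> * t" using t assms(1) by (intro mult_right_mono) auto
    moreover have "0 \<le> \<nu> * t" using t assms(1) by simp
    ultimately have "cosh ((1/2) * t) \<le> cosh (\<nu> * t)"
      using t by (subst cosh_real_nonneg_le_iff) auto
    thus "exp (- z * cosh t) * cosh ((1/2) * t) \<le> exp (- z * cosh t) * cosh (\<nu> * t)"
      by (intro mult_left_mono) auto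
  qed
  show "besselK (1/2) z \<ge> B"
    unfolding K_half[OF assms(4)] by (rule final_ineq[OF assms(2-5)])
qed

end
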